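(* Let $k$ be a positive integer and let $m>k$ be an integer. If $v$ and $w$ are vertices lying in distinct connected components of $\mathcal F_k^{(m)}$, then they lie in distinct connected components of $\mathcal F_k^{(m+1)}$.
   Context: The vertex set $V$ consists of all reduced fractions $p/q$ with $p,q\in\mathbb Z$, $\gcd(p,q)=1$, together with $1/0$; here $p/q$ and $(-p)/(-q)$ denote the same vertex. For vertices define $d(p/q,a/b)=|pb-qa|$. The graph $\mathcal F_k$ has vertex set $V$, with an edge between $p/q$ and $a/b$ exactly when $d(p/q,a/b)=k$. The level of a vertex $p/q$ is $\max\{|p|,|q|\}$. For $m\in\mathbb N$, $\mathcal F_k^{(m)}$ is the subgraph of $\mathcal F_k$ induced on the vertices of level at most $m$. *)

theory Defs
  imports Main
begin

text \<open>A vertex p/q is represented by its canonical integer pair (p,q):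
  gcd p q = 1 and either q > 0, or q = 0 and p = 1 (the vertex 1/0).
  Every reduced fraction (identified with its negative) has exactly one
  such representative.\<close>

definition vertex :: "int \<times> int \<Rightarrow> bool" where
  "vertex v \<longleftrightarrow> (case v of (p, q) \<Rightarrow>
      gcd p q = 1 \<and> (q > 0 \<or> (q = 0 \<and> p = 1)))"

definition fdist :: "int \<times> int \<Rightarrow> int \<times> int \<Rightarrow> int" where
  "fdist v w = (case v of (p, q) \<Rightarrow> case w of (a, b) \<Rightarrow> \<bar>p * b - q * a\<bar>)"

definition level :: "int \<times> int \<Rightarrow> int" where
  "level v = (case v of (p, q) \<Rightarrow> max \<bar>p\<bar> \<bar>q\<bar>)"

definition F_edge :: "int \<Rightarrow> int \<times> int \<Rightarrow> int \<times> int \<Rightarrow> bool" where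
  "F_edge k v w \<longleftrightarrow> vertex v \<and> vertex w \<and> fdist v w = k"

definition F_sub_edge :: "int \<Rightarrow> int \<Rightarrow> int \<times> int \<Rightarrow> int \<times> int \<Rightarrow> bool" where
  "F_sub_edge k m v w \<longleftrightarrow> F_edge k v w \<and> level v \<le> m \<and> level w \<le> m"

definition same_component :: "int \<Rightarrow> int \<Rightarrow> int \<times> int \<Rightarrow> int \<times> int \<Rightarrow> bool" where
  "same_component k m v w \<longleftrightarrow>
     vertex v \<and> vertex w \<and> level v \<le> m \<and> level w \<le> m \<and> (F_sub_edge k m)\<^sup>*\<^sup>* v w"

end

theory Submission
  imports Defs
begin

lemma indep_aux:
  fixes P Q A B k N :: int
  assumes "0 < k" "k < N" "\<bar>P\<bar> = N" "\<bar>B\<bar> = N" "\<bar>Q\<bar> \<le> N" "\<bar>A\<bar> \<le> N"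
    and "\<bar>P * B - Q * A\<bar> = k"
  shows "\<bar>Q\<bar> = N"
proof (rule ccontr)
  assume "\<bar>Q\<bar> \<noteq> N"
  hence q1: "\<bar>Q\<bar> \<le> N - 1" using assms(5) by linarith
  have "\<bar>Q\<bar> * \<bar>A\<bar> \<le> (N - 1) * \<bar>A\<bar>" using q1 by (rule mult_right_mono) simp
  also have "\<dots> \<le> (N - 1) * N" using assms(6) assms(1,2) by (intro mult_left_mono) linarith+
  finally have h1: "\<bar>Q * A\<bar> \<le> (N - 1) * N" by (simp add: abs_mult)
  have h2: "\<bar>P * B\<bar> = N * N" using assms(3,4) by (simp add: abs_mult)
  have h3: "\<bar>P * B\<bar> \<le> \<bar>P * B - Q * A\<bar> + \<bar>Q * A\<bar>" by (rule order_trans[OF _ abs_triangle_ineq]) simp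
  have "N * N \<le> k + (N - 1) * N" using h1 h2 h3 assms(7) by linarith
  moreover have "(N - 1) * N = N * N - N" by (simp add: algebra_simps)
  ultimately show False using assms(2) by linarith
qed

lemma same_abs:
  fixes P Q A B k N :: int
  assumes "0 < k" "k < N" "\<bar>Q\<bar> = N" "\<bar>B\<bar> = N"
    and "\<bar>P * B - Q * A\<bar> = k"
  shows False
proof -
  have "B = Q \<or> B = - Q" using assms(3,4) by linarith
  then obtain r where r: "P * B - Q * A = Q * r"
  proof
    assume "B = Q" thus ?thesis using that[of "P - A"] by (simp add: algebra_simps)
  next
    assume "B = - Q" thus ?thesis using that[of "- P - A"] by (simp add: algebra_simps)
  qed
  hence k: "\<bar>Q\<bar> * \<bar>r\<bar> = k" using assms(5) by (simp add: abs_mult)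
  hence "r \<noteq> 0" using assms(1) by auto
  hence "1 \<le> \<bar>r\<bar>" by linarith
  hence "\<bar>Q\<bar> * 1 \<le> \<bar>Q\<bar> * \<bar>r\<bar>" by (rule mult_left_mono) simp
  thus False using k assms(2,3) by linarith
qed

lemma indep:
  fixes p q a b k N :: int
  assumes "0 < k" "k < N" "max \<bar>p\<bar> \<bar>q\<bar> = N" "max \<bar>a\<bar> \<bar>b\<bar> = N"
    and "\<bar>p * b - q * a\<bar> = k"
  shows False
proof -
  have sw: "\<bar>b * p - a * q\<bar> = k" using assms(5) by (simp add: abs_minus_commute mult.commute)
  have sw2: "\<bar>q * a - p * b\<bar> = k" using assms(5) by (simp add: abs_minus_commute)
  have sw3: "\<bar>a * q - b * p\<bar> = k" using assms(5) by (simp add: abs_minus_commute mult.commute)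
  have P: "\<bar>p\<bar> = N \<or> \<bar>q\<bar> = N" using assms(3) by linarith
  have A: "\<bar>a\<bar> = N \<or> \<bar>b\<bar> = N" using assms(4) by linarith
  have qa: "\<bar>q\<bar> \<le> N" "\<bar>p\<bar> \<le> N" "\<bar>a\<bar> \<le> N" "\<bar>b\<bar> \<le> N" using assms(3,4) by auto
  show False
  proof (cases "\<bar>p\<bar> = N")
    case p: True
    show False
    proof (cases "\<bar>a\<bar> = N")
      case True
      show False by (rule same_abs[OF assms(1,2) p True sw2])
    next
      case False
      hence b: "\<bar>b\<bar> = N" using A by simp
      have "\<bar>q\<bar> = N" using indep_aux[OF assms(1,2) p b qa(1) qa(3) assms(5)] by simp
      show False using same_abs[OF assms(1,2) _ b assms(5)] \<open>\<bar>q\<bar> = N\<close> by blast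
    qed
  next
    case False
    hence q: "\<bar>q\<bar> = N" using P by simp
    show False
    proof (cases "\<bar>a\<bar> = N")
      case a: True
      have "\<bar>p\<bar> = N" using indep_aux[OF assms(1,2) q a qa(2) qa(4) sw2] by simp
      show False using same_abs[OF assms(1,2) _ a sw2] \<open>\<bar>p\<bar> = N\<close> by blast
    next
      case False
      hence b: "\<bar>b\<bar> = N" using A by simp
      show False by (rule same_abs[OF assms(1,2) q b assms(5)])
    qed
  qed
qed

lemma key0:
  fixes p q a b c d k m :: int
  assumes "0 < k" "1 \<le> m" "gcd p q = 1" "max \<bar>p\<bar> \<bar>q\<bar> = m + 1"
    and "\<bar>a\<bar> \<le> m" "\<bar>b\<bar> \<le> m" "\<bar>c\<bar> \<le> m" "\<bar>d\<bar> \<le> m"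
    and e1: "p * b - q * a = k" and e2: "p * d - q * c = k"
  shows "(a = c \<and> b = d) \<or> \<bar>a * d - b * c\<bar> = k"
proof -
  have p0: "p \<noteq> 0"
  proof
    assume "p = 0"
    hence "\<bar>q\<bar> = 1" using assms(3) by simp
    thus False using assms \<open>p = 0\<close> by simp
  qed
  have eq: "p * (b - d) = q * (a - c)" using e1 e2 by (simp add: algebra_simps)
  have "coprime p q" using assms(3) by (simp add: coprime_iff_gcd_eq_1)
  moreover have "p dvd q * (a - c)" using eq by (metis dvd_triv_left)
  ultimately have "p dvd (a - c)" by (simp add: coprime_dvd_mult_right_iff)
  then obtain s where s1: "a - c = p * s" by (auto elim: dvdE)
  have "p * (b - d) = p * (q * s)" using eq s1 by (simp add: algebra_simps)
  hence s2: "b - d = q * s" using p0 by simp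
  have "\<bar>s\<bar> \<le> 1"
  proof (rule ccontr)
    assume "\<not> \<bar>s\<bar> \<le> 1"
    hence "\<bar>s\<bar> \<ge> 2" by simp
    hence "\<bar>a - c\<bar> \<ge> 2 * \<bar>p\<bar>" "\<bar>b - d\<bar> \<ge> 2 * \<bar>q\<bar>" using s1 s2
      by (simp_all add: abs_mult mult.commute mult_left_mono)
    thus False using assms by linarith
  qed
  hence "s = 0 \<or> s = 1 \<or> s = -1" by auto
  moreover have "a * d - b * c = s * (p * d - q * c)"
  proof -
    have "a = c + p * s" "b = d + q * s" using s1 s2 by simp_all
    thus ?thesis by (simp add: algebra_simps)
  qed
  hence "\<bar>a * d - b * c\<bar> = \<bar>s\<bar> * k" using e2 assms(1) by (simp add: abs_mult)
  ultimately show ?thesis using s1 s2 by auto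
qed

lemma key:
  fixes p q a b c d k m :: int
  assumes "0 < k" "1 \<le> m" "gcd p q = 1" "max \<bar>p\<bar> \<bar>q\<bar> = m + 1"
    and "\<bar>a\<bar> \<le> m" "\<bar>b\<bar> \<le> m" "\<bar>c\<bar> \<le> m" "\<bar>d\<bar> \<le> m"
    and e1: "\<bar>p * b - q * a\<bar> = k" and e2: "\<bar>p * d - q * c\<bar> = k"
  shows "(a = c \<and> b = d) \<or> (a = - c \<and> b = - d) \<or> \<bar>a * d - b * c\<bar> = k"
proof -
  obtain a' b' where ab: "(a' = a \<and> b' = b) \<or> (a' = -a \<and> b' = -b)" and f1: "p * b' - q * a' = k"
  proof (cases "p * b - q * a = k")
    case True then show ?thesis using that by blast
  next
    case False
    hence "p * (-b) - q * (-a) = k" using e1 by (simp add: algebra_simps abs_if split: if_splits)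
    then show ?thesis using that by blast
  qed
  obtain c' d' where cd: "(c' = c \<and> d' = d) \<or> (c' = -c \<and> d' = -d)" and f2: "p * d' - q * c' = k"
  proof (cases "p * d - q * c = k")
    case True then show ?thesis using that by blast
  next
    case False
    hence "p * (-d) - q * (-c) = k" using e2 by (simp add: algebra_simps abs_if split: if_splits)
    then show ?thesis using that by blast
  qed
  have "\<bar>a'\<bar> \<le> m" "\<bar>b'\<bar> \<le> m" "\<bar>c'\<bar> \<le> m" "\<bar>d'\<bar> \<le> m" using ab cd assms by auto
  hence "(a' = c' \<and> b' = d') \<or> \<bar>a' * d' - b' * c'\<bar> = k"
    using key0[OF assms(1-4) _ _ _ _ f1 f2] by blast
  moreover have "\<bar>a' * d' - b' * c'\<bar> = \<bar>a * d - b * c\<bar>" using ab cd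
    by (auto simp: algebra_simps abs_minus_commute)
  ultimately show ?thesis using ab cd by auto
qed

lemma vertex_neg: "vertex (a, b) \<Longrightarrow> vertex (-a, -b) \<Longrightarrow> False"
  unfolding vertex_def by auto

lemma vertex_gcd: "vertex (p, q) \<Longrightarrow> gcd p q = 1"
  unfolding vertex_def by auto

lemma nbr:
  assumes "0 < k" "1 \<le> m" "vertex x" "level x = m + 1" "F_edge k u x" "F_edge k y x"
    "level u \<le> m" "level y \<le> m"
  shows "u = y \<or> F_edge k u y"
proof -
  obtain p q where x: "x = (p, q)" by fastforce
  obtain a b where u: "u = (a, b)" by fastforce
  obtain c d where y: "y = (c, d)" by fastforce
  have g: "gcd p q = 1" using assms(3) x vertex_gcd by simp
  have "\<bar>p * b - q * a\<bar> = k" "\<bar>p * d - q * c\<bar> = k"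
    using assms(5,6) x u y unfolding F_edge_def fdist_def
    by (simp_all add: abs_minus_commute mult.commute)
  moreover have "max \<bar>p\<bar> \<bar>q\<bar> = m + 1" using assms(4) x by (simp add: level_def)
  moreover have "\<bar>a\<bar> \<le> m" "\<bar>b\<bar> \<le> m" "\<bar>c\<bar> \<le> m" "\<bar>d\<bar> \<le> m"
    using assms(7,8) u y by (simp_all add: level_def)
  ultimately have "(a = c \<and> b = d) \<or> (a = - c \<and> b = - d) \<or> \<bar>a * d - b * c\<bar> = k"
    using key[OF assms(1,2) g] by blast
  moreover have "vertex u" "vertex y" using assms(5,6) unfolding F_edge_def by auto
  ultimately show ?thesis using u y vertex_neg[of c d]
    unfolding F_edge_def fdist_def by auto
qed

lemma indep2:
  assumes "0 < k" "k < m + 1" "F_edge k x y" "level x = m + 1" "level y = m + 1"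
  shows False
proof -
  obtain p q where x: "x = (p, q)" by fastforce
  obtain a b where y: "y = (a, b)" by fastforce
  show False
    using indep[of k "m + 1" p q a b] assms x y unfolding F_edge_def fdist_def level_def by simp
qed

lemma level_nonneg: "level x \<ge> 0"
  unfolding level_def by (auto split: prod.splits)

lemma path:
  assumes "0 < k" "k < m" "(F_sub_edge k (m + 1))\<^sup>*\<^sup>* v w" "level v \<le> m"
  shows "(level w \<le> m \<and> (F_sub_edge k m)\<^sup>*\<^sup>* v w) \<or>
         (level w = m + 1 \<and> vertex w \<and> (\<exists>u. level u \<le> m \<and> (F_sub_edge k m)\<^sup>*\<^sup>* v u \<and> F_edge k u w))"
  using assms(3)
proof (induction rule: rtranclp_induct)
  case base
  then show ?case using assms by simp
next
  case (step w w2)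
  have e: "F_edge k w w2" "level w \<le> m + 1" "level w2 \<le> m + 1"
    using step.hyps(2) unfolding F_sub_edge_def by auto
  have sym: "F_edge k w2 w" using e(1) unfolding F_edge_def fdist_def
    by (auto split: prod.splits simp: abs_minus_commute mult.commute)
  have vw2: "vertex w2" using e(1) unfolding F_edge_def by auto
  from step.IH show ?case
  proof
    assume A: "level w \<le> m \<and> (F_sub_edge k m)\<^sup>*\<^sup>* v w"
    show ?case
    proof (cases "level w2 \<le> m")
      case True
      hence "F_sub_edge k m w w2" using e A unfolding F_sub_edge_def by auto
      then show ?thesis using A True by (meson rtranclp.rtrancl_into_rtrancl)
    next
      case False
      hence "level w2 = m + 1" using e by simp
      then show ?thesis using A e(1) vw2 by blast
    qed
  next
    assume B: "level w = m + 1 \<and> vertex w \<and> (\<exists>u. level u \<le> m \<and> (F_sub_edge k m)\<^sup>*\<^sup>* v u \<and> F_edge k u w)"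
    then obtain u where u: "level u \<le> m" "(F_sub_edge k m)\<^sup>*\<^sup>* v u" "F_edge k u w" by blast
    show ?case
    proof (cases "level w2 \<le> m")
      case True
      have "u = w2 \<or> F_edge k u w2"
        using nbr[of k m w u w2] assms B u True sym by auto
      then show ?thesis
      proof
        assume "u = w2" then show ?thesis using u True by simp
      next
        assume "F_edge k u w2"
        hence "F_sub_edge k m u w2" using u True unfolding F_sub_edge_def by auto
        then show ?thesis using u True by (meson rtranclp.rtrancl_into_rtrancl)
      qed
    next
      case False
      hence "level w2 = m + 1" using e by simp
      then show ?thesis using indep2[of k m w w2] e B assms by simp
    qed
  qed
qed

theorem proposition4p8:
  fixes k m :: int and v w :: "int \<times> int"
  assumes "k > 0" and "m > k"
    and "vertex v" and "vertex w" and "level v \<le> m" and "level w \<le> m"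
    and "\<not> same_component k m v w"
  shows "\<not> same_component k (m + 1) v w"
proof
  assume "same_component k (m + 1) v w"
  hence "(F_sub_edge k (m + 1))\<^sup>*\<^sup>* v w" unfolding same_component_def by auto
  from path[OF assms(1,2) this assms(5)] have "(F_sub_edge k m)\<^sup>*\<^sup>* v w"
    using assms(6) by auto
  thus False using assms unfolding same_component_def by auto
qed

end
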